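(* Let $A$ be a set of positive integers with $1\in A$. Then $G(0,A)=0$ and, for every $n\ge1$, $G(n,A)=G(n-1,A)+x$, where $x$ is the smallest element of $A$ with $\mathrm{gap}(x)>G(n-1,A)$ (if no such $x$ exists, then no integer causes the greedy algorithm to use $n$ or more coins).
   Context: For $x\in A$, let $\mathrm{gap}(x)=x'-x$ where $x'$ is the smallest element of $A$ greater than $x$, with $\mathrm{gap}(x)=\infty$ if $x=\max A$. The greedy change-making algorithm with coin values $A$, applied to a nonnegative integer $s$, uses no coins if $s=0$, and otherwise selects the largest $c\in A$ with $c\le s$ and then recursively makes change for $s-c$; the number of coins it uses is the total number of selections made. For $n\ge0$, $G(n,A)$ denotes the smallest nonnegative integer $s$ for which the greedy change-making algorithm with coin values $A$ uses at least $n$ coins. *)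

theory Defs
  imports Main "HOL-Library.Extended_Nat"
begin

definition gap :: "nat set \<Rightarrow> nat \<Rightarrow> enat" where
  "gap A x = (if \<exists>y\<in>A. x < y then enat ((LEAST y. y \<in> A \<and> x < y) - x) else \<infinity>)"

inductive greedy_uses :: "nat set \<Rightarrow> nat \<Rightarrow> nat \<Rightarrow> bool" for A where
  zero: "greedy_uses A 0 0"
| step: "\<lbrakk>0 < s; c = Max {c\<in>A. c \<le> s}; greedy_uses A (s - c) k\<rbrakk>
          \<Longrightarrow> greedy_uses A s (Suc k)"

definition G :: "nat \<Rightarrow> nat set \<Rightarrow> nat" where
  "G n A = (LEAST s. \<exists>k. greedy_uses A s k \<and> n \<le> k)"

end

theory Submission
  imports Defs
begin

lemma finS: "finite {c\<in>A. c \<le> (s::nat)}"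
  by (rule finite_subset[of _ "{..s}"]) auto

lemma gap1:
  fixes A :: "nat set"
  assumes c: "c = Max {c\<in>A. c \<le> s}" and cA: "c \<in> A" and cs: "c \<le> s"
  shows "enat (s - c) < gap A c"
proof (cases "\<exists>y\<in>A. c < y")
  case True
  define y0 where "y0 = (LEAST y. y \<in> A \<and> c < y)"
  have y0: "y0 \<in> A \<and> c < y0" unfolding y0_def using True by - (rule LeastI_ex, blast)
  have "\<not> y0 \<le> s"
  proof
    assume "y0 \<le> s"
    then have "y0 \<le> c" unfolding c using y0 finS by (intro Max_ge) auto
    then show False using y0 by simp
  qed
  then have "gap A c = enat (y0 - c)" unfolding gap_def y0_def using True by simp
  then show ?thesis using \<open>\<not> y0 \<le> s\<close> cs by simp
next
  case False
  then show ?thesis unfolding gap_def by simp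
qed

lemma gap2:
  fixes A :: "nat set"
  assumes xA: "x \<in> A" and g: "enat g < gap A x"
  shows "Max {c\<in>A. c \<le> g + x} = x"
proof (rule Max_eqI)
  show "finite {c\<in>A. c \<le> g + x}" by (rule finS)
  show "x \<in> {c\<in>A. c \<le> g + x}" using xA by simp
  fix y assume y: "y \<in> {c\<in>A. c \<le> g + x}"
  show "y \<le> x"
  proof (rule ccontr)
    assume "\<not> y \<le> x"
    then have "x < y" by simp
    then have ex: "\<exists>y\<in>A. x < y" using y by blast
    define y0 where "y0 = (LEAST y. y \<in> A \<and> x < y)"
    have "y0 \<le> y" unfolding y0_def using y \<open>\<not> y \<le> x\<close> by (intro Least_le) auto
    moreover have "gap A x = enat (y0 - x)" unfolding gap_def y0_def using ex by simp
    ultimately have "g < y0 - x" using g by simp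
    moreover have "y \<le> g + x" using y by simp
    ultimately show False using \<open>y0 \<le> y\<close> by arith
  qed
qed

theorem mainTheorem9:
  fixes A :: "nat set"
  assumes pos: "\<forall>a\<in>A. 0 < a" and one: "1 \<in> A"
  shows "G 0 A = 0 \<and>
    (\<forall>n\<ge>1. (\<exists>s k. greedy_uses A s k \<and> n - 1 \<le> k) \<longrightarrow>
       ((\<exists>x\<in>A. gap A x > enat (G (n - 1) A)) \<longrightarrow>
          G n A = G (n - 1) A + (LEAST x. x \<in> A \<and> gap A x > enat (G (n - 1) A)))
     \<and> ((\<not> (\<exists>x\<in>A. gap A x > enat (G (n - 1) A))) \<longrightarrow>
          \<not> (\<exists>s k. greedy_uses A s k \<and> n \<le> k)))"
proof (intro conjI allI impI)
  show "G 0 A = 0" unfolding G_def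
    by (rule Least_equality) (auto intro: greedy_uses.zero)
next
  fix n :: nat
  assume n1: "n \<ge> 1" and ex: "\<exists>s k. greedy_uses A s k \<and> n - 1 \<le> k"
  define g where "g = G (n - 1) A"
  have gex: "\<exists>k. greedy_uses A g k \<and> n - 1 \<le> k"
    unfolding g_def G_def using ex by - (rule LeastI_ex, blast)
  have gmin: "\<And>s k. greedy_uses A s k \<Longrightarrow> n - 1 \<le> k \<Longrightarrow> g \<le> s"
    unfolding g_def G_def by (rule Least_le) blast
  have Min_in: "\<And>s. 0 < s \<Longrightarrow> Max {c\<in>A. c \<le> s} \<in> A \<and> Max {c\<in>A. c \<le> s} \<le> s
      \<and> 0 < Max {c\<in>A. c \<le> s}"
  proof -
    fix s :: nat assume "0 < s"
    then have ne: "{c\<in>A. c \<le> s} \<noteq> {}" using one by auto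
    have "Max {c\<in>A. c \<le> s} \<in> {c\<in>A. c \<le> s}" using Max_in[OF finS ne] .
    then show "Max {c\<in>A. c \<le> s} \<in> A \<and> Max {c\<in>A. c \<le> s} \<le> s
      \<and> 0 < Max {c\<in>A. c \<le> s}" using pos by auto
  qed
  have gk: "greedy_uses A g (n - 1)"
  proof -
    obtain k where k: "greedy_uses A g k" "n - 1 \<le> k" using gex by blast
    have "k \<le> n - 1"
      using k(1)
    proof (cases rule: greedy_uses.cases)
      case zero then show ?thesis by simp
    next
      case (step c k')
      have "0 < c" using Min_in[OF step(2)] step(3) by simp
      have "\<not> n - 1 \<le> k'"
      proof
        assume "n - 1 \<le> k'"
        then have "g \<le> g - c" using gmin step(4) by blast
        then show False using \<open>0 < c\<close> step(2) by simp
      qed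
      then show ?thesis using step(1) by simp
    qed
    then show ?thesis using k by simp
  qed
  have lower: "\<And>s k. greedy_uses A s k \<Longrightarrow> n \<le> k \<Longrightarrow> \<exists>c\<in>A. enat g < gap A c \<and> c + g \<le> s"
  proof -
    fix s k assume gs: "greedy_uses A s k" and nk: "n \<le> k"
    show "\<exists>c\<in>A. enat g < gap A c \<and> c + g \<le> s"
      using gs
    proof (cases rule: greedy_uses.cases)
      case zero then show ?thesis using nk n1 by simp
    next
      case (step c k')
      have cA: "c \<in> A" "c \<le> s" using Min_in[OF step(2)] step(3) by auto
      have "g \<le> s - c" using gmin step(4) step(1) nk by simp
      moreover have "enat (s - c) < gap A c" using gap1[OF step(3) cA] .
      ultimately have "enat g < gap A c"
        by (meson enat_ord_simps(1) le_less_trans)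
      then show ?thesis using cA \<open>g \<le> s - c\<close> by auto
    qed
  qed
  {
    assume "\<exists>x\<in>A. gap A x > enat (G (n - 1) A)"
    then have exx: "\<exists>x. x\<in>A \<and> gap A x > enat g" unfolding g_def by blast
    define x where "x = (LEAST x. x \<in> A \<and> gap A x > enat g)"
    have x: "x \<in> A \<and> gap A x > enat g" unfolding x_def using exx by (rule LeastI_ex)
    have xpos: "0 < x" using x pos by auto
    have mx: "x = Max {c\<in>A. c \<le> g + x}" using gap2 x by simp
    have gk2: "greedy_uses A (g + x - x) (n - 1)" using gk by simp
    have "greedy_uses A (g + x) (Suc (n - 1))"
      using greedy_uses.step[OF _ mx gk2] xpos by simp
    then have gx: "greedy_uses A (g + x) n" using n1 by simp
    have "G n A = g + x" unfolding G_def
    proof (rule Least_equality)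
      show "\<exists>k. greedy_uses A (g + x) k \<and> n \<le> k" using gx by blast
      fix s assume "\<exists>k. greedy_uses A s k \<and> n \<le> k"
      then obtain c where c: "c \<in> A" "enat g < gap A c" "c + g \<le> s" using lower by blast
      have "x \<le> c" unfolding x_def using c by (intro Least_le) auto
      then show "g + x \<le> s" using c by simp
    qed
    then show "G n A = G (n - 1) A + (LEAST x. x \<in> A \<and> gap A x > enat (G (n - 1) A))"
      by (simp add: x_def g_def)
  }
  show "\<not> (\<exists>s k. greedy_uses A s k \<and> n \<le> k)" if "\<not> (\<exists>x\<in>A. gap A x > enat (G (n - 1) A))"
    using lower that g_def by blast
qed

end
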